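(* Let $L$ be a linear order with a first element such that $L/\!\sim_\omega\;\cong 1$ and $\operatorname{cf}(L)=\omega_1$. Then $L$ is isomorphic to a suborder of $U$.
   Context: The countable condensation $\sim_\omega$ on a linear order $L$: $x\sim_\omega y$ iff the closed interval between $x$ and $y$ is countable; $L/\!\sim_\omega\;\cong 1$ means all elements of $L$ are mutually $\sim_\omega$-equivalent. $\operatorname{cf}(L)$ is the least length of a strictly increasing cofinal sequence in $L$. $U$ is the linear order $R^*+\mathbb{Q}+R$, where $R$ is obtained from $\omega_1$ by replacing each $\alpha<\omega_1$ with a point $u_\alpha$ followed by a copy of the rationals, $R^*$ is the reverse of $R$, and the middle summand is a copy of the rationals. *)

theory Defs
  imports Main "HOL-Library.Countable_Set"
begin

definition omega_equiv :: "'a::linorder \<Rightarrow> 'a \<Rightarrow> bool" where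
  "omega_equiv x y \<longleftrightarrow> countable {z. min x y \<le> z \<and> z \<le> max x y}"

text \<open>L / ~_omega is the one-point order: all elements are mutually equivalent.\<close>
definition condensation_trivial :: "'a::linorder itself \<Rightarrow> bool" where
  "condensation_trivial _ \<longleftrightarrow> (\<forall>x y::'a. omega_equiv x y)"

text \<open>A strictly increasing sequence in L is identified with its range S (a subset
  well-ordered by the order of L); its length is the order type of S.\<close>
definition cofinal :: "'a::linorder set \<Rightarrow> bool" where
  "cofinal S \<longleftrightarrow> (\<forall>x. \<exists>s\<in>S. x \<le> s)"

definition ord_on :: "'a::linorder set \<Rightarrow> 'a rel" where
  "ord_on S = {(x, y). x \<in> S \<and> y \<in> S \<and> x \<le> y}"

definition omega1 :: "nat set rel" where
  "omega1 = cardSuc natLeq"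

definition cf_is_omega1 :: "'a::linorder itself \<Rightarrow> bool" where
  "cf_is_omega1 _ \<longleftrightarrow>
     (\<exists>S::'a set. cofinal S \<and> Well_order (ord_on S) \<and> (ord_on S, omega1) \<in> ordIso) \<and>
     (\<forall>S::'a set. cofinal S \<and> Well_order (ord_on S) \<longrightarrow> (omega1, ord_on S) \<in> ordLeq)"

text \<open>R: each alpha < omega_1 replaced by a point u_alpha = (alpha, None)
  followed by a copy of the rationals (alpha, Some q).\<close>
type_synonym Relt = "nat set \<times> rat option"

definition R_carrier :: "Relt set" where
  "R_carrier = {(a, p). a \<in> Field omega1}"

fun opt_less :: "rat option \<Rightarrow> rat option \<Rightarrow> bool" where
  "opt_less None (Some _) = True"
| "opt_less (Some p) (Some q) = (p < q)"
| "opt_less _ _ = False"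

definition R_less :: "Relt \<Rightarrow> Relt \<Rightarrow> bool" where
  "R_less x y \<longleftrightarrow>
     ((fst x, fst y) \<in> omega1 \<and> fst x \<noteq> fst y) \<or>
     (fst x = fst y \<and> opt_less (snd x) (snd y))"

text \<open>Elements of U: Inl r (r in R*, reversed R), Inr (Inl q) (middle rationals),
  Inr (Inr r) (r in R).\<close>
type_synonym Uelt = "Relt + rat + Relt"

definition U_carrier :: "Uelt set" where
  "U_carrier = Inl ` R_carrier \<union> range (\<lambda>q. Inr (Inl q)) \<union> (\<lambda>r. Inr (Inr r)) ` R_carrier"

fun U_less :: "Uelt \<Rightarrow> Uelt \<Rightarrow> bool" where
  "U_less (Inl x) (Inl y) = R_less y x"
| "U_less (Inl _) (Inr _) = True"
| "U_less (Inr (Inl p)) (Inr (Inl q)) = (p < q)"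
| "U_less (Inr (Inl _)) (Inr (Inr _)) = True"
| "U_less (Inr (Inr x)) (Inr (Inr y)) = R_less x y"
| "U_less _ _ = False"

definition embeds_into_U :: "'a::linorder itself \<Rightarrow> bool" where
  "embeds_into_U _ \<longleftrightarrow>
     (\<exists>f::'a \<Rightarrow> Uelt. f ` UNIV \<subseteq> U_carrier \<and> (\<forall>x y. x < y \<longleftrightarrow> U_less (f x) (f y)))"

end

theory Submission
  imports Defs
begin

definition pickq :: "(nat \<Rightarrow> 'b::linorder) \<Rightarrow> rat list \<Rightarrow> nat \<Rightarrow> rat" where
  "pickq e l n = (let lo = {l!m | m. m < length l \<and> e m < e n};
                      up = {l!m | m. m < length l \<and> e n < e m} in
     if lo = {} then (if up = {} then 0 else Min up - 1)
     else (if up = {} then Max lo + 1 else (Max lo + Min up) / 2))"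

primrec hs :: "(nat \<Rightarrow> 'b::linorder) \<Rightarrow> nat \<Rightarrow> rat list" where
  "hs e 0 = []"
| "hs e (Suc n) = hs e n @ [pickq e (hs e n) n]"

lemma between:
  fixes lo up :: "rat set"
  assumes "finite lo" "finite up" "\<forall>a\<in>lo. \<forall>b\<in>up. a < b"
  shows "(\<forall>a\<in>lo. a < (if lo = {} then (if up = {} then 0 else Min up - 1)
     else (if up = {} then Max lo + 1 else (Max lo + Min up) / 2))) \<and>
         (\<forall>b\<in>up. (if lo = {} then (if up = {} then 0 else Min up - 1)
     else (if up = {} then Max lo + 1 else (Max lo + Min up) / 2)) < b)"
proof (cases "lo = {}")
  case True
  have "\<forall>b\<in>up. Min up \<le> b" using assms by auto
  then show ?thesis using True by fastforce
next
  case False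
  show ?thesis
  proof (cases "up = {}")
    case True
    have "\<forall>a\<in>lo. a \<le> Max lo" using assms by auto
    then show ?thesis using True False by fastforce
  next
    case F2: False
    have "Max lo < Min up" using assms False F2 by auto
    moreover have "\<forall>a\<in>lo. a \<le> Max lo" "\<forall>b\<in>up. Min up \<le> b" using assms by auto
    ultimately show ?thesis using False F2 by (auto simp: field_simps)
  qed
qed

lemma length_hs[simp]: "length (hs e n) = n"
  by (induct n) auto

lemma hs_prefix: "m < n \<Longrightarrow> hs e n ! m = hs e (Suc m) ! m"
proof (induct n)
  case 0 then show ?case by simp
next
  case (Suc n)
  then show ?case by (cases "m = n") (auto simp: nth_append)
qed

lemma hs_inv: "\<forall>m m'. m < n \<and> m' < n \<and> e m < e m' \<longrightarrow> hs e n ! m < hs e n ! m'"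
proof (induct n)
  case 0 then show ?case by simp
next
  case (Suc n)
  define l where "l = hs e n"
  define lo where "lo = {l!m | m. m < length l \<and> e m < e n}"
  define up where "up = {l!m | m. m < length l \<and> e n < e m}"
  have fl: "finite lo" unfolding lo_def by simp
  have fu: "finite up" unfolding up_def by simp
  have sep: "\<forall>a\<in>lo. \<forall>b\<in>up. a < b"
    using Suc unfolding lo_def up_def l_def by auto
  have p: "pickq e l n = (if lo = {} then (if up = {} then 0 else Min up - 1)
     else (if up = {} then Max lo + 1 else (Max lo + Min up) / 2))"
    unfolding pickq_def lo_def up_def Let_def by simp
  have B: "(\<forall>a\<in>lo. a < pickq e l n) \<and> (\<forall>b\<in>up. pickq e l n < b)"
    unfolding p using between[OF fl fu sep] by blast
  show ?case
  proof (intro allI impI)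
    fix m m' assume a: "m < Suc n \<and> m' < Suc n \<and> e m < e m'"
    show "hs e (Suc n) ! m < hs e (Suc n) ! m'"
    proof (cases "m = n")
      case True
      then have "m' < n" using a by (cases "m' = n") auto
      then have "l ! m' \<in> up" using a True unfolding up_def l_def by auto
      then show ?thesis using B True \<open>m' < n\<close> by (simp add: nth_append l_def)
    next
      case False
      then have mn: "m < n" using a by auto
      show ?thesis
      proof (cases "m' = n")
        case True
        then have "l ! m \<in> lo" using a mn unfolding lo_def l_def by auto
        then show ?thesis using B True mn by (simp add: nth_append l_def)
      next
        case False
        then have "m' < n" using a by auto
        then show ?thesis using Suc mn a by (simp add: nth_append)
      qed
    qed
  qed
qed

lemma countable_embed_rat:
  fixes A :: "'b::linorder set"
  assumes "countable A"
  shows "\<exists>q::'b \<Rightarrow> rat. \<forall>x\<in>A. \<forall>y\<in>A. x < y \<longrightarrow> q x < q y"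
proof -
  define e where "e = from_nat_into A"
  define q where "q x = hs e (Suc (to_nat_on A x)) ! (to_nat_on A x)" for x
  have "q x < q y" if "x \<in> A" "y \<in> A" "x < y" for x y
  proof -
    let ?i = "to_nat_on A x" and ?j = "to_nat_on A y"
    define N where "N = Suc (max ?i ?j)"
    have ex: "e ?i = x" "e ?j = y" using assms that unfolding e_def by auto
    have lt: "?i < N" "?j < N" unfolding N_def by auto
    have "hs e N ! ?i < hs e N ! ?j"
      using hs_inv[of N e, rule_format, of ?i ?j] ex that lt by auto
    moreover have "hs e N ! ?i = q x" "hs e N ! ?j = q y"
      unfolding q_def by (rule hs_prefix[OF lt(1)], rule hs_prefix[OF lt(2)])
    ultimately show ?thesis by simp
  qed
  then show ?thesis by blast
qed

theorem proposition3p13: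
  fixes x0 :: "'a::linorder"
  assumes first: "\<forall>y::'a. x0 \<le> y"
    and cond: "condensation_trivial TYPE('a)"
    and cf: "cf_is_omega1 TYPE('a)"
  shows "embeds_into_U TYPE('a)"
proof -
  obtain S :: "'a set" where cof: "cofinal S" and iso: "(ord_on S, omega1) \<in> ordIso"
    using cf unfolding cf_is_omega1_def by blast
  have WS: "Well_order (ord_on S)" and Wo: "Well_order omega1"
    using iso unfolding ordIso_def by auto
  obtain phi where phi: "iso (ord_on S) omega1 phi"
    using iso unfolding ordIso_def by auto
  have FS: "Field (ord_on S) = S"
    unfolding ord_on_def Field_def by auto
  have bij: "bij_betw phi S (Field omega1)"
    and comp: "\<forall>a\<in>S. \<forall>b\<in>S. a \<le> b \<longleftrightarrow> (phi a, phi b) \<in> omega1"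
    using phi unfolding iso_iff2 FS by (auto simp: ord_on_def)
  have wfS: "wf (ord_on S - Id)"
    using WS unfolding well_order_on_def by blast
  have antiO: "antisym omega1"
    using Wo unfolding well_order_on_def linear_order_on_def partial_order_on_def by blast
  have least: "\<exists>s\<in>S. x \<le> s \<and> (\<forall>t\<in>S. x \<le> t \<longrightarrow> s \<le> t)" for x
  proof -
    obtain s0 where s0: "s0 \<in> S" "x \<le> s0" using cof unfolding cofinal_def by blast
    then have s0m: "s0 \<in> {s\<in>S. x \<le> s}" by simp
    obtain m where m: "m \<in> {s\<in>S. x \<le> s}"
      and mn: "\<And>y. (y, m) \<in> ord_on S - Id \<Longrightarrow> y \<notin> {s\<in>S. x \<le> s}"
      using wfS[unfolded wf_eq_minimal, rule_format, OF s0m] by blast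
    have "m \<le> t" if "t \<in> S" "x \<le> t" for t
    proof (rule ccontr)
      assume "\<not> m \<le> t"
      then have "(t, m) \<in> ord_on S - Id" using that m unfolding ord_on_def by auto
      then have "t \<notin> {s\<in>S. x \<le> s}" by (rule mn)
      then show False using that by simp
    qed
    then show ?thesis using m by blast
  qed
  define sig where "sig x = (SOME s. s \<in> S \<and> x \<le> s \<and> (\<forall>t\<in>S. x \<le> t \<longrightarrow> s \<le> t))" for x
  have sig: "sig x \<in> S \<and> x \<le> sig x \<and> (\<forall>t\<in>S. x \<le> t \<longrightarrow> sig x \<le> t)" for x
    unfolding sig_def by (rule someI_ex) (use least[of x] in blast)
  have cnt: "countable {z. z \<le> s}" for s :: 'a
  proof -
    have "omega_equiv x0 s" using cond unfolding condensation_trivial_def by blast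
    then have "countable {z. min x0 s \<le> z \<and> z \<le> max x0 s}" unfolding omega_equiv_def .
    moreover have "{z. z \<le> s} \<subseteq> {z. min x0 s \<le> z \<and> z \<le> max x0 s}"
      using first by (auto simp: min_le_iff_disj le_max_iff_disj)
    ultimately show ?thesis using countable_subset by blast
  qed
  have "\<exists>q::'a \<Rightarrow> rat. \<forall>x\<in>{z. z \<le> s}. \<forall>y\<in>{z. z \<le> s}. x < y \<longrightarrow> q x < q y" for s
    using countable_embed_rat[OF cnt] .
  then have "\<forall>s. \<exists>q::'a \<Rightarrow> rat. \<forall>x\<in>{z. z \<le> s}. \<forall>y\<in>{z. z \<le> s}. x < y \<longrightarrow> q x < q y" by blast
  from choice[OF this] obtain Q :: "'a \<Rightarrow> 'a \<Rightarrow> rat" where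
    Q0: "\<forall>s. \<forall>x\<in>{z. z \<le> s}. \<forall>y\<in>{z. z \<le> s}. x < y \<longrightarrow> Q s x < Q s y"
    by blast
  have Q: "Q s x < Q s y" if "x \<le> s" "y \<le> s" "x < y" for s x y
    using Q0 that by blast
  define f :: "'a \<Rightarrow> Uelt" where "f x = Inr (Inr (phi (sig x), Some (Q (sig x) x)))" for x
  have fwd: "U_less (f x) (f y)" if "x < y" for x y
  proof -
    have le: "sig x \<le> sig y" using sig[of x] sig[of y] that by auto
    show ?thesis
    proof (cases "sig x = sig y")
      case True
      then have "Q (sig x) x < Q (sig x) y" using Q[of x "sig x" y] sig[of x] sig[of y] that by simp
      then show ?thesis using True by (simp add: f_def R_less_def)
    next
      case False
      then have "phi (sig x) \<noteq> phi (sig y)"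
        using bij sig[of x] sig[of y] unfolding bij_betw_def inj_on_def by blast
      moreover have "(phi (sig x), phi (sig y)) \<in> omega1" using comp sig[of x] sig[of y] le by blast
      ultimately show ?thesis by (simp add: f_def R_less_def)
    qed
  qed
  have irr: "\<not> R_less a a" for a
    unfolding R_less_def by (cases "snd a") (auto elim: opt_less.elims)
  have asym: "\<not> (R_less a b \<and> R_less b a)" for a b
  proof
    assume h: "R_less a b \<and> R_less b a"
    show False
    proof (cases "fst a = fst b")
      case True
      then have "opt_less (snd a) (snd b) \<and> opt_less (snd b) (snd a)" using h unfolding R_less_def by auto
      then show False by (cases "snd a"; cases "snd b") auto
    next
      case False
      then have "(fst a, fst b) \<in> omega1" "(fst b, fst a) \<in> omega1" using h unfolding R_less_def by auto
      then show False using antiO False unfolding antisym_def by blast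
    qed
  qed
  have "x < y \<longleftrightarrow> U_less (f x) (f y)" for x y
  proof
    assume "x < y" then show "U_less (f x) (f y)" by (rule fwd)
  next
    assume u: "U_less (f x) (f y)"
    show "x < y"
    proof (rule ccontr)
      assume "\<not> x < y"
      then consider "x = y" | "y < x" by fastforce
      then show False
      proof cases
        case 1 then show False using u irr unfolding f_def by simp
      next
        case 2 then have "U_less (f y) (f x)" by (rule fwd)
        then show False using u asym unfolding f_def by auto
      qed
    qed
  qed
  moreover have "f ` UNIV \<subseteq> U_carrier"
    using bij sig unfolding U_carrier_def R_carrier_def f_def bij_betw_def by auto
  ultimately show ?thesis unfolding embeds_into_U_def by blast
qed

end
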